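(* Let $w=w_1\cdots w_n\in S_n$ and view $w$ as the composition $(w_1,\ldots,w_n)$. Then the Newton polytope $\mathrm{Newton}(\kappa_w)$ of the key polynomial $\kappa_w(x)$ equals the Bruhat interval polytope $\mathsf{Q}_{w,w_0}$, where $w_0=n\,(n-1)\cdots 2\,1$ is the maximum of $S_n$ in the Bruhat order.
   Context: For a polynomial $f=\sum_\alpha c_\alpha x^\alpha\in\mathbb{R}[x_1,\ldots,x_n]$, $\mathrm{Newton}(f)$ is the convex hull of $\{\alpha\colon c_\alpha\neq0\}$. Let $\partial_i f=(f-s_if)/(x_i-x_{i+1})$, where $s_if$ swaps $x_i$ and $x_{i+1}$, and $\pi_i f=\partial_i(x_if)$. Key polynomials for a composition $\alpha$ of length $n$: if $\alpha$ is weakly decreasing, $\kappa_\alpha=x^\alpha$; otherwise choose $i$ with $\alpha_i<\alpha_{i+1}$, let $\alpha'$ be $\alpha$ with $\alpha_i,\alpha_{i+1}$ interchanged, and set $\kappa_\alpha=\pi_i\kappa_{\alpha'}$. For $u\le v$ in the Bruhat order on $S_n$, the Bruhat interval polytope $\mathsf{Q}_{u,v}$ is the convex hull in $\mathbb{R}^n$ of the vectors $(\sigma_1,\ldots,\sigma_n)$ for all $\sigma$ in the Bruhat interval $[u,v]$. *)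

theory Defs
  imports Complex_Main "HOL-Library.Poly_Mapping"
begin

text \<open>The paper's variable x_(i+1) is our Var i (0-based indexing).\<close>

type_synonym mpoly = "(nat \<Rightarrow>\<^sub>0 nat) \<Rightarrow>\<^sub>0 real"

definition Var :: "nat \<Rightarrow> mpoly" where
  "Var i = Poly_Mapping.single (Poly_Mapping.single i 1) 1"

definition exps :: "nat list \<Rightarrow> (nat \<Rightarrow>\<^sub>0 nat)" where
  "exps a = Abs_poly_mapping (\<lambda>j. if j < length a then a ! j else 0)"

definition monom :: "nat list \<Rightarrow> mpoly" where
  "monom a = Poly_Mapping.single (exps a) 1"

definition swap_idx :: "nat \<Rightarrow> nat \<Rightarrow> nat" where
  "swap_idx i j = (if j = i then Suc i else if j = Suc i then i else j)"

definition swap_exp :: "nat \<Rightarrow> (nat \<Rightarrow>\<^sub>0 nat) \<Rightarrow> (nat \<Rightarrow>\<^sub>0 nat)" where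
  "swap_exp i \<alpha> = Abs_poly_mapping (\<lambda>j. Poly_Mapping.lookup \<alpha> (swap_idx i j))"

definition swap_poly :: "nat \<Rightarrow> mpoly \<Rightarrow> mpoly" where
  "swap_poly i f = Abs_poly_mapping (\<lambda>\<alpha>. Poly_Mapping.lookup f (swap_exp i \<alpha>))"

definition divdiff :: "nat \<Rightarrow> mpoly \<Rightarrow> mpoly" where
  "divdiff i f = (THE g. (Var i - Var (Suc i)) * g = f - swap_poly i f)"

definition pi_op :: "nat \<Rightarrow> mpoly \<Rightarrow> mpoly" where
  "pi_op i f = divdiff i (Var i * f)"

text \<open>Number of pairs i < j with a_i < a_j (strictly decreases by one at each step of the
  recursion below, so it is exactly the needed number of steps).\<close>
definition n_asc :: "nat list \<Rightarrow> nat" where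
  "n_asc a = card {(i, j). i < j \<and> j < length a \<and> a ! i < a ! j}"

fun key_aux :: "nat \<Rightarrow> nat list \<Rightarrow> mpoly" where
  "key_aux 0 a = monom a"
| "key_aux (Suc k) a =
     (if sorted_wrt (\<ge>) a then monom a
      else (let i = (LEAST i. Suc i < length a \<and> a ! i < a ! Suc i)
            in pi_op i (key_aux k (a[i := a ! Suc i, Suc i := a ! i]))))"

definition key :: "nat list \<Rightarrow> mpoly" where
  "key a = key_aux (n_asc a) a"

definition conv :: "(nat \<Rightarrow> real) set \<Rightarrow> (nat \<Rightarrow> real) set" where
  "conv S = {x. \<exists>k (c :: nat \<Rightarrow> real) (p :: nat \<Rightarrow> nat \<Rightarrow> real).
                 (\<forall>l<k. 0 \<le> c l \<and> p l \<in> S) \<and> (\<Sum>l<k. c l) = 1 \<and>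
                 x = (\<lambda>j. \<Sum>l<k. c l * p l j)}"

definition newton :: "mpoly \<Rightarrow> (nat \<Rightarrow> real) set" where
  "newton f = conv {(\<lambda>j. real (Poly_Mapping.lookup \<alpha> j)) | \<alpha>. Poly_Mapping.lookup f \<alpha> \<noteq> 0}"

definition perms :: "nat \<Rightarrow> nat list set" where
  "perms n = {\<sigma>. distinct \<sigma> \<and> set \<sigma> = {1..n}}"

text \<open>u < u t_(ij) whenever the length increases, i.e. u_i < u_j for positions i < j.\<close>
definition bruhat_step :: "nat list \<Rightarrow> nat list \<Rightarrow> bool" where
  "bruhat_step u v = (\<exists>i j. i < j \<and> j < length u \<and> u ! i < u ! j \<and>
                            v = u[i := u ! j, j := u ! i])"

definition bruhat_le :: "nat list \<Rightarrow> nat list \<Rightarrow> bool" where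
  "bruhat_le = bruhat_step\<^sup>*\<^sup>*"

definition w0 :: "nat \<Rightarrow> nat list" where
  "w0 n = rev [1..<Suc n]"

definition perm_vec :: "nat list \<Rightarrow> (nat \<Rightarrow> real)" where
  "perm_vec \<sigma> = (\<lambda>j. if j < length \<sigma> then real (\<sigma> ! j) else 0)"

definition bruhat_polytope :: "nat \<Rightarrow> nat list \<Rightarrow> nat list \<Rightarrow> (nat \<Rightarrow> real) set" where
  "bruhat_polytope n u v =
     conv {perm_vec \<sigma> | \<sigma>. \<sigma> \<in> perms n \<and> bruhat_le u \<sigma> \<and> bruhat_le \<sigma> v}"

end

theory Submission
  imports Defs
begin


definition swp :: "nat \<Rightarrow> nat list \<Rightarrow> nat list" where
  "swp i a = a[i := a ! Suc i, Suc i := a ! i]"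

lemma length_swp[simp]: "length (swp i a) = length a"
  by (simp add: swp_def)

lemma swap_idx_inv[simp]: "swap_idx i (swap_idx i j) = j"
  by (auto simp: swap_idx_def)

lemma swap_idx_eq_iff: "swap_idx i j = k \<longleftrightarrow> j = swap_idx i k"
  by (auto simp: swap_idx_def)

lemma swap_idx_less: "Suc i < n \<Longrightarrow> j < n \<Longrightarrow> swap_idx i j < n"
  by (auto simp: swap_idx_def)

lemma nth_swp: "Suc i < length a \<Longrightarrow> j < length a \<Longrightarrow> swp i a ! j = a ! swap_idx i j"
  by (auto simp: swp_def swap_idx_def nth_list_update)

lemma swp_swp: "Suc i < length a \<Longrightarrow> swp i (swp i a) = a"
  by (rule nth_equalityI) (auto simp: nth_swp swap_idx_less)

lemma swp_nth_i: "Suc i < length a \<Longrightarrow> swp i a ! i = a ! Suc i"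
  by (simp add: nth_swp swap_idx_def)
lemma swp_nth_Si: "Suc i < length a \<Longrightarrow> swp i a ! Suc i = a ! i"
  by (simp add: nth_swp swap_idx_def)

lemma distinct_swp: "Suc i < length a \<Longrightarrow> distinct (swp i a) = distinct a"
  by (simp add: swp_def)

lemma set_swp: "Suc i < length a \<Longrightarrow> set (swp i a) = set a"
  by (simp add: swp_def)

lemma asc_step: "Suc i < length a \<Longrightarrow> a ! i < a ! Suc i \<Longrightarrow> bruhat_step a (swp i a)"
  unfolding bruhat_step_def swp_def by (rule exI[of _ i], rule exI[of _ "Suc i"]) simp

lemma step_length: "bruhat_step u v \<Longrightarrow> length v = length u"
  by (auto simp: bruhat_step_def)

lemma step_distinct: "bruhat_step u v \<Longrightarrow> distinct u \<Longrightarrow> distinct v"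
  by (auto simp: bruhat_step_def)

lemma step_set: "bruhat_step u v \<Longrightarrow> set v = set u"
  by (auto simp: bruhat_step_def)

lemma le_inv: "bruhat_le u v \<Longrightarrow> length v = length u \<and> set v = set u \<and> (distinct u \<longrightarrow> distinct v)"
  unfolding bruhat_le_def
  by (induction rule: rtranclp_induct) (auto dest: step_length step_set step_distinct)

lemma ble_trans: "bruhat_le u v \<Longrightarrow> bruhat_le v w \<Longrightarrow> bruhat_le u w"
  unfolding bruhat_le_def by simp

lemma ble_refl[simp]: "bruhat_le u u"
  unfolding bruhat_le_def by simp

lemma step_le: "bruhat_step u v \<Longrightarrow> bruhat_le u v"
  unfolding bruhat_le_def by simp

lemma step_swp:
  assumes st: "bruhat_step \<tau> \<sigma>" and i: "Suc i < length \<tau>" and ne: "\<sigma> \<noteq> swp i \<tau>"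
  shows "bruhat_step (swp i \<tau>) (swp i \<sigma>)"
proof -
  obtain p q where pq: "p < q" "q < length \<tau>" "\<tau> ! p < \<tau> ! q" and \<sigma>: "\<sigma> = \<tau>[p := \<tau> ! q, q := \<tau> ! p]"
    using st by (auto simp: bruhat_step_def)
  have npq: "\<not> (p = i \<and> q = Suc i)"
    using ne \<sigma> by (auto simp: swp_def)
  define p' where "p' = swap_idx i p"
  define q' where "q' = swap_idx i q"
  have "p' < q'" using pq npq by (auto simp: p'_def q'_def swap_idx_def)
  moreover have "q' < length (swp i \<tau>)" using pq i by (simp add: q'_def swap_idx_less)
  moreover have "swp i \<tau> ! p' < swp i \<tau> ! q'"
    using pq i by (simp add: nth_swp p'_def q'_def swap_idx_less)
  moreover have "swp i \<sigma> = (swp i \<tau>)[p' := swp i \<tau> ! q', q' := swp i \<tau> ! p']"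
  proof (rule nth_equalityI)
    show "length (swp i \<sigma>) = length ((swp i \<tau>)[p' := swp i \<tau> ! q', q' := swp i \<tau> ! p'])"
      by (simp add: \<sigma>)
  next
    fix j assume j: "j < length (swp i \<sigma>)"
    then have j': "j < length \<tau>" by (simp add: \<sigma>)
    have sj: "swap_idx i j < length \<tau>" using j' i by (simp add: swap_idx_less)
    have pl: "p' < length \<tau>" "q' < length \<tau>" using pq i by (auto simp: p'_def q'_def swap_idx_less)
    show "swp i \<sigma> ! j = (swp i \<tau>)[p' := swp i \<tau> ! q', q' := swp i \<tau> ! p'] ! j"
      using j' sj pl pq i
      by (simp add: nth_swp \<sigma> nth_list_update p'_def q'_def swap_idx_eq_iff swap_idx_less)
  qed
  ultimately show ?thesis unfolding bruhat_step_def by blast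
qed

definition Dm :: "nat \<Rightarrow> nat list \<Rightarrow> nat list" where
  "Dm i \<sigma> = (if \<sigma> ! Suc i < \<sigma> ! i then \<sigma> else swp i \<sigma>)"
definition dm :: "nat \<Rightarrow> nat list \<Rightarrow> nat list" where
  "dm i \<sigma> = (if \<sigma> ! i < \<sigma> ! Suc i then \<sigma> else swp i \<sigma>)"

lemma distinct_ne: "distinct a \<Longrightarrow> Suc i < length a \<Longrightarrow> a ! i \<noteq> a ! Suc i"
  by (simp add: nth_eq_iff_index_eq)

lemma mono_D:
  assumes st: "bruhat_step \<tau> \<sigma>" and d: "distinct \<tau>" and i: "Suc i < length \<tau>"
  shows "bruhat_le (Dm i \<tau>) (Dm i \<sigma>) \<and> bruhat_le (dm i \<tau>) (dm i \<sigma>)"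
proof -
  have l: "length \<sigma> = length \<tau>" using st by (rule step_length)
  have ds: "distinct \<sigma>" using st d by (rule step_distinct)
  have nt: "\<tau> ! i \<noteq> \<tau> ! Suc i" using d i by (rule distinct_ne)
  have ns: "\<sigma> ! i \<noteq> \<sigma> ! Suc i" using ds i l by (intro distinct_ne) auto
  show ?thesis
  proof (cases "\<sigma> = swp i \<tau>")
    case True
    then show ?thesis using i nt
      by (auto simp: Dm_def dm_def swp_nth_i swp_nth_Si swp_swp)
  next
    case False
    have S: "bruhat_step (swp i \<tau>) (swp i \<sigma>)" using step_swp[OF st i False] .
    have ssi: "swp i (swp i \<sigma>) = \<sigma>" using i l by (simp add: swp_swp)
    have st1: "\<tau> ! i < \<tau> ! Suc i \<Longrightarrow> bruhat_step \<tau> (swp i \<tau>)" using i by (rule asc_step)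
    have st2: "\<tau> ! Suc i < \<tau> ! i \<Longrightarrow> bruhat_step (swp i \<tau>) \<tau>"
      using asc_step[of i "swp i \<tau>"] i by (simp add: swp_nth_i swp_nth_Si swp_swp)
    have st3: "\<sigma> ! i < \<sigma> ! Suc i \<Longrightarrow> bruhat_step \<sigma> (swp i \<sigma>)" using i l by (intro asc_step) auto
    have st4: "\<sigma> ! Suc i < \<sigma> ! i \<Longrightarrow> bruhat_step (swp i \<sigma>) \<sigma>"
      using asc_step[of i "swp i \<sigma>"] i l by (simp add: swp_nth_i swp_nth_Si swp_swp)
    have A: "bruhat_le (Dm i \<tau>) (Dm i \<sigma>)"
    proof (cases "\<tau> ! Suc i < \<tau> ! i")
      case True
      then show ?thesis
        using st st3 ns by (cases "\<sigma> ! Suc i < \<sigma> ! i")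
          (auto simp: Dm_def intro: step_le ble_trans[OF step_le step_le])
    next
      case False
      then show ?thesis
        using S st4 ns nt by (cases "\<sigma> ! Suc i < \<sigma> ! i")
          (auto simp: Dm_def intro: step_le ble_trans[OF step_le step_le])
    qed
    have B: "bruhat_le (dm i \<tau>) (dm i \<sigma>)"
    proof (cases "\<tau> ! i < \<tau> ! Suc i")
      case True
      then show ?thesis
        using st st1 S ns by (cases "\<sigma> ! i < \<sigma> ! Suc i")
          (auto simp: dm_def intro: step_le ble_trans[OF step_le step_le])
    next
      case False
      then have "\<tau> ! Suc i < \<tau> ! i" using nt by simp
      then show ?thesis
        using S st st2 ns nt False by (cases "\<sigma> ! i < \<sigma> ! Suc i")
          (auto simp: dm_def intro: step_le ble_trans[OF step_le step_le])
    qed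
    from A B show ?thesis ..
  qed
qed

lemma mono_D_le:
  assumes "bruhat_le \<tau> \<sigma>" "distinct \<tau>" "Suc i < length \<tau>"
  shows "bruhat_le (Dm i \<tau>) (Dm i \<sigma>) \<and> bruhat_le (dm i \<tau>) (dm i \<sigma>)"
  using assms(1) unfolding bruhat_le_def
proof (induction rule: rtranclp_induct)
  case base
  then show ?case by (simp add: bruhat_le_def)
next
  case (step y z)
  have "length y = length \<tau> \<and> distinct y" using le_inv[OF step(1)[folded bruhat_le_def]] assms by auto
  then have "bruhat_le (Dm i y) (Dm i z) \<and> bruhat_le (dm i y) (dm i z)"
    using mono_D[OF step(2)] assms by auto
  with step(3) show ?case unfolding bruhat_le_def by auto
qed

lemma L1:
  assumes "distinct w" "Suc i < length w" "w ! i < w ! Suc i" "bruhat_le w \<sigma>"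
  shows "bruhat_le (swp i w) (Dm i \<sigma>)"
proof -
  have "Dm i w = swp i w" using assms by (simp add: Dm_def)
  then show ?thesis using mono_D_le[OF assms(4,1,2)] by simp
qed

lemma L2:
  assumes "distinct w" "Suc i < length w" "w ! i < w ! Suc i" "bruhat_le (swp i w) \<sigma>"
  shows "bruhat_le w (swp i \<sigma>)"
proof -
  have dw: "distinct (swp i w)" using assms by (simp add: distinct_swp)
  have "dm i (swp i w) = w" using assms by (simp add: dm_def swp_nth_i swp_nth_Si swp_swp)
  moreover have "Suc i < length (swp i w)" using assms(2) by simp
  ultimately have 1: "bruhat_le w (dm i \<sigma>)" using mono_D_le[OF assms(4) dw] by metis
  have l: "length \<sigma> = length w" using le_inv[OF assms(4)] by simp
  show ?thesis
  proof (cases "\<sigma> ! i < \<sigma> ! Suc i")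
    case True
    then have "bruhat_step \<sigma> (swp i \<sigma>)" using l assms(2) by (intro asc_step) auto
    then show ?thesis using 1 True by (auto simp: dm_def intro: ble_trans step_le)
  next
    case False
    then show ?thesis using 1 by (simp add: dm_def)
  qed
qed

lemma sorted_top:
  assumes "sorted_wrt (\<ge>) a" "bruhat_le a \<sigma>"
  shows "\<sigma> = a"
proof -
  have "\<not> bruhat_step a b" for b
    using assms(1) by (auto simp: bruhat_step_def sorted_wrt_iff_nth_less not_less[symmetric])
  then show ?thesis using assms(2) unfolding bruhat_le_def
    by (auto elim: converse_rtranclpE)
qed

definition pairs :: "nat list \<Rightarrow> (nat \<times> nat) set" where
  "pairs a = {(i, j). i < j \<and> j < length a \<and> a ! i < a ! j}"

lemma n_asc_pairs: "n_asc a = card (pairs a)"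
  by (simp add: n_asc_def pairs_def)

lemma finite_pairs: "finite (pairs a)"
  by (rule finite_subset[of _ "{..<length a} \<times> {..<length a}"]) (auto simp: pairs_def)

lemma n_asc_swp:
  assumes i: "Suc i < length a" and asc: "a ! i < a ! Suc i"
  shows "n_asc (swp i a) < n_asc a"
proof -
  let ?f = "\<lambda>(p, q). (swap_idx i p, swap_idx i q)"
  have inj: "inj_on ?f (pairs (swp i a))"
    by (rule inj_onI) (auto simp: swap_idx_eq_iff)
  have sub: "?f ` pairs (swp i a) \<subseteq> pairs a - {(i, Suc i)}"
  proof
    fix x assume "x \<in> ?f ` pairs (swp i a)"
    then obtain p q where x: "x = (swap_idx i p, swap_idx i q)" and pq: "p < q" "q < length a"
      "swp i a ! p < swp i a ! q" by (auto simp: pairs_def)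
    have "\<not> (p = i \<and> q = Suc i)" using pq i asc by (auto simp: swp_nth_i swp_nth_Si)
    then have "swap_idx i p < swap_idx i q" using pq by (auto simp: swap_idx_def)
    moreover have "a ! swap_idx i p < a ! swap_idx i q" using pq i by (simp add: nth_swp)
    moreover have "swap_idx i q < length a" using pq i by (simp add: swap_idx_less)
    moreover have "x \<noteq> (i, Suc i)" using x pq by (auto simp: swap_idx_def split: if_splits)
    ultimately show "x \<in> pairs a - {(i, Suc i)}" using x by (simp add: pairs_def)
  qed
  have "card (pairs (swp i a)) \<le> card (pairs a - {(i, Suc i)})"
    using card_inj_on_le[OF inj sub] finite_pairs by simp
  also have "\<dots> < card (pairs a)"
    using i asc finite_pairs by (intro card_Diff1_less) (auto simp: pairs_def)
  finally show ?thesis by (simp add: n_asc_pairs)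
qed

lemma not_sorted_asc:
  assumes "\<not> sorted_wrt (\<ge>) (a :: nat list)"
  shows "\<exists>i. Suc i < length a \<and> a ! i < a ! Suc i"
proof -
  have "transp ((\<ge>) :: nat \<Rightarrow> nat \<Rightarrow> bool)" by (auto simp: transp_def)
  then show ?thesis using assms by (auto simp: sorted_wrt_iff_nth_Suc_transp not_le)
qed

lemma n_asc_zero_sorted: "n_asc a = 0 \<Longrightarrow> sorted_wrt (\<ge>) a"
  using not_sorted_asc[of a] finite_pairs[of a]
  by (auto simp: n_asc_pairs pairs_def)

lemma perm_sorted_w0:
  assumes "\<sigma> \<in> perms n" "sorted_wrt (\<ge>) \<sigma>"
  shows "\<sigma> = w0 n"
proof -
  have "sorted (rev \<sigma>)" using assms(2) by (simp add: sorted_wrt_rev)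
  moreover have "distinct (rev \<sigma>)" "set (rev \<sigma>) = {1..n}" using assms(1) by (auto simp: perms_def)
  moreover have "sorted [1..<Suc n]" "distinct [1..<Suc n]" "set [1..<Suc n] = {1..n}"
    by (rule sorted_upt, rule distinct_upt) auto
  ultimately have "rev \<sigma> = [1..<Suc n]"
    by (metis sorted_distinct_set_unique)
  then show ?thesis by (simp add: w0_def rev_swap)
qed

lemma perms_length: "\<sigma> \<in> perms n \<Longrightarrow> length \<sigma> = n"
  unfolding perms_def using distinct_card[of \<sigma>] by auto

lemma le_w0:
  assumes "\<sigma> \<in> perms n"
  shows "bruhat_le \<sigma> (w0 n)"
  using assms
proof (induction "n_asc \<sigma>" arbitrary: \<sigma> rule: less_induct)
  case less
  show ?case
  proof (cases "sorted_wrt (\<ge>) \<sigma>")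
    case True
    then show ?thesis using perm_sorted_w0[OF less(2)] by simp
  next
    case False
    then obtain i where i: "Suc i < length \<sigma>" "\<sigma> ! i < \<sigma> ! Suc i" using not_sorted_asc by blast
    have "swp i \<sigma> \<in> perms n" using less(2) i by (simp add: perms_def distinct_swp set_swp)
    then have "bruhat_le (swp i \<sigma>) (w0 n)" using less(1)[OF n_asc_swp[OF i]] by simp
    then show ?thesis using asc_step[OF i] by (auto intro: ble_trans step_le)
  qed
qed


lemma conv_single: "x \<in> S \<Longrightarrow> x \<in> conv S"
  unfolding conv_def
  by (rule CollectI, rule exI[of _ 1], rule exI[of _ "\<lambda>_. 1"], rule exI[of _ "\<lambda>_. x"]) simp

lemma conv_mono: "S \<subseteq> T \<Longrightarrow> conv S \<subseteq> conv T"
  unfolding conv_def mem_Collect_eq by blast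

lemma sum_split_nat: "(\<Sum>l<a + b. g l) = (\<Sum>l<a. g l) + (\<Sum>l<b. g (a + l))" for b :: nat
  by (induction b) (simp_all add: add.assoc)

lemma conv_convex:
  assumes x: "x \<in> conv T" and y: "y \<in> conv T" and t: "0 \<le> t" "t \<le> 1"
  shows "(\<lambda>j. t * x j + (1 - t) * y j) \<in> conv T"
proof -
  obtain k1 :: nat and c1 p1 where 1: "\<forall>l<k1. 0 \<le> c1 l \<and> p1 l \<in> T" "(\<Sum>l<k1. c1 l) = 1"
    "x = (\<lambda>j. \<Sum>l<k1. c1 l * p1 l j)" using x unfolding conv_def mem_Collect_eq by blast
  obtain k2 :: nat and c2 p2 where 2: "\<forall>l<k2. 0 \<le> c2 l \<and> p2 l \<in> T" "(\<Sum>l<k2. c2 l) = 1"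
    "y = (\<lambda>j. \<Sum>l<k2. c2 l * p2 l j)" using y unfolding conv_def mem_Collect_eq by blast
  define c where "c l = (if l < k1 then t * c1 l else (1 - t) * c2 (l - k1))" for l
  define p where "p l = (if l < k1 then p1 l else p2 (l - k1))" for l
  have "\<forall>l<k1 + k2. 0 \<le> c l \<and> p l \<in> T"
  proof (intro allI impI)
    fix l assume "l < k1 + k2"
    then show "0 \<le> c l \<and> p l \<in> T" using 1 2 t by (auto simp: c_def p_def)
  qed
  moreover have "(\<Sum>l<k1 + k2. c l) = 1"
    using 1 2 by (simp add: sum_split_nat c_def sum_distrib_left[symmetric])
  moreover have "(\<lambda>j. t * x j + (1 - t) * y j) = (\<lambda>j. \<Sum>l<k1 + k2. c l * p l j)"
    using 1 2 by (simp add: sum_split_nat c_def p_def sum_distrib_left mult.assoc)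
  ultimately show ?thesis unfolding conv_def mem_Collect_eq
    by (intro exI[of _ "k1 + k2"] exI[of _ c] exI[of _ p]) simp
qed

lemma conv_conv:
  assumes "S \<subseteq> conv T"
  shows "conv S \<subseteq> conv T"
proof -
  have "\<And>c p. (\<forall>l<k. 0 \<le> c l \<and> p l \<in> S) \<Longrightarrow> (\<Sum>l<k. c l) = 1 \<Longrightarrow>
      (\<lambda>j. \<Sum>l<k. c l * p l j) \<in> conv T" for k :: nat
  proof (induction k)
    case 0
    then show ?case by simp
  next
    case (Suc k)
    show ?case
    proof (cases "c k = 1")
      case True
      then have s0: "(\<Sum>l<k. c l) = 0" using Suc.prems(2) by simp
      have "\<forall>l\<in>{..<k}. c l = 0"
        using sum_nonneg_eq_0_iff[of "{..<k}" c] s0 Suc.prems(1) by auto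
      then have "(\<lambda>j. \<Sum>l<Suc k. c l * p l j) = p k" using True by (simp add: fun_eq_iff)
      then show ?thesis using Suc.prems(1) assms conv_single by auto
    next
      case False
      have ck: "0 \<le> c k" "c k \<le> 1"
        using Suc.prems sum_nonneg[of "{..<k}" c] by auto
      with False have ck1: "c k < 1" by simp
      define c' where "c' l = c l / (1 - c k)" for l
      have IH: "(\<lambda>j. \<Sum>l<k. c' l * p l j) \<in> conv T"
      proof (rule Suc.IH)
        show "\<forall>l<k. 0 \<le> c' l \<and> p l \<in> S" using Suc.prems(1) ck1 by (auto simp: c'_def)
        have "(\<Sum>l<k. c l) = 1 - c k" using Suc.prems(2) by simp
        then show "(\<Sum>l<k. c' l) = 1" using ck1 by (simp add: c'_def sum_divide_distrib[symmetric])
      qed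
      have pk: "p k \<in> conv T" using Suc.prems(1) assms by auto
      have "(\<lambda>j. c k * p k j + (1 - c k) * (\<Sum>l<k. c' l * p l j)) \<in> conv T"
        by (rule conv_convex[OF pk IH ck])
      moreover have "(\<lambda>j. c k * p k j + (1 - c k) * (\<Sum>l<k. c' l * p l j)) = (\<lambda>j. \<Sum>l<Suc k. c l * p l j)"
        using ck1 by (simp add: fun_eq_iff sum_distrib_left c'_def)
      ultimately show ?thesis by simp
    qed
  qed
  then show ?thesis unfolding conv_def by auto
qed

lemma conv_comp:
  assumes "x \<in> conv T"
  shows "(x \<circ> g) \<in> conv ((\<lambda>y. y \<circ> g) ` T)"
proof -
  obtain k :: nat and c p where 1: "\<forall>l<k. 0 \<le> c l \<and> p l \<in> T" "(\<Sum>l<k. c l) = 1"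
    "x = (\<lambda>j. \<Sum>l<k. c l * p l j)" using assms unfolding conv_def mem_Collect_eq by blast
  have "\<forall>l<k. 0 \<le> c l \<and> (p l \<circ> g) \<in> (\<lambda>y. y \<circ> g) ` T" using 1 by auto
  moreover have "x \<circ> g = (\<lambda>j. \<Sum>l<k. c l * (p l \<circ> g) j)" using 1 by auto
  ultimately show ?thesis unfolding conv_def mem_Collect_eq using 1(2)
    by (intro exI[of _ k] exI[of _ c] exI[of _ "\<lambda>l. p l \<circ> g"]) simp
qed


lemma lookup_exps: "Poly_Mapping.lookup (exps a) j = (if j < length a then a ! j else 0)"
proof -
  have "{j. (if j < length a then a ! j else 0) \<noteq> 0} \<subseteq> {..<length a}" by auto
  then have "finite {j. (if j < length a then a ! j else (0::nat)) \<noteq> 0}"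
    by (rule finite_subset) simp
  then show ?thesis unfolding exps_def by simp
qed


lemma lookup_swap_exp: "Poly_Mapping.lookup (swap_exp i \<alpha>) j = Poly_Mapping.lookup \<alpha> (swap_idx i j)"
proof -
  have "{j. Poly_Mapping.lookup \<alpha> (swap_idx i j) \<noteq> 0} \<subseteq> swap_idx i ` Poly_Mapping.keys \<alpha>"
    by (auto simp: in_keys_iff intro!: image_eqI[where x="swap_idx i _"])
  then have "finite {j. Poly_Mapping.lookup \<alpha> (swap_idx i j) \<noteq> 0}"
    by (rule finite_subset) auto
  then show ?thesis unfolding swap_exp_def by simp
qed

lemma swap_exp_inv[simp]: "swap_exp i (swap_exp i \<alpha>) = \<alpha>"
  by (rule poly_mapping_eqI) (simp add: lookup_swap_exp)

lemma lookup_swap_poly: "Poly_Mapping.lookup (swap_poly i f) \<alpha> = Poly_Mapping.lookup f (swap_exp i \<alpha>)"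
proof -
  have "{\<alpha>. Poly_Mapping.lookup f (swap_exp i \<alpha>) \<noteq> 0} \<subseteq> swap_exp i ` Poly_Mapping.keys f"
    by (auto simp: in_keys_iff intro!: image_eqI[where x="swap_exp i _"])
  then have "finite {\<alpha>. Poly_Mapping.lookup f (swap_exp i \<alpha>) \<noteq> 0}"
    by (rule finite_subset) auto
  then show ?thesis unfolding swap_poly_def by simp
qed

lemma swap_poly_diff: "swap_poly i (f - g) = swap_poly i f - swap_poly i g"
  by (rule poly_mapping_eqI) (simp add: lookup_swap_poly lookup_minus)

lemma swap_poly_sum: "finite A \<Longrightarrow> swap_poly i (sum F A) = (\<Sum>x\<in>A. swap_poly i (F x))"
  by (rule poly_mapping_eqI) (simp add: lookup_swap_poly lookup_sum)

lemma swap_poly_single: "swap_poly i (Poly_Mapping.single \<beta> c) = Poly_Mapping.single (swap_exp i \<beta>) c"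
proof (rule poly_mapping_eqI)
  fix \<alpha>
  have eq: "(\<beta> = swap_exp i \<alpha>) = (swap_exp i \<beta> = \<alpha>)" by (metis swap_exp_inv)
  show "Poly_Mapping.lookup (swap_poly i (Poly_Mapping.single \<beta> c)) \<alpha> =
    Poly_Mapping.lookup (Poly_Mapping.single (swap_exp i \<beta>) c) \<alpha>"
    by (simp only: lookup_swap_poly lookup_single eq)
qed

definition setij :: "nat \<Rightarrow> (nat \<Rightarrow>\<^sub>0 nat) \<Rightarrow> nat \<Rightarrow> nat \<Rightarrow> (nat \<Rightarrow>\<^sub>0 nat)" where
  "setij i \<beta> u v = Abs_poly_mapping (\<lambda>j. if j = i then u else if j = Suc i then v else Poly_Mapping.lookup \<beta> j)"

lemma lookup_setij: "Poly_Mapping.lookup (setij i \<beta> u v) j =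
   (if j = i then u else if j = Suc i then v else Poly_Mapping.lookup \<beta> j)"
proof -
  have "{j. (if j = i then u else if j = Suc i then v else Poly_Mapping.lookup \<beta> j) \<noteq> 0}
        \<subseteq> Poly_Mapping.keys \<beta> \<union> {i, Suc i}"
    by (auto simp: in_keys_iff)
  then have "finite {j. (if j = i then u else if j = Suc i then v else Poly_Mapping.lookup \<beta> j) \<noteq> 0}"
    by (rule finite_subset) simp
  then show ?thesis unfolding setij_def by simp
qed

lemma setij_self: "setij i \<beta> (Poly_Mapping.lookup \<beta> i) (Poly_Mapping.lookup \<beta> (Suc i)) = \<beta>"
  by (rule poly_mapping_eqI) (simp add: lookup_setij)

lemma setij_eq_iff: "setij i \<beta> u v = \<gamma> \<longleftrightarrow>
   (\<forall>j. j \<noteq> i \<and> j \<noteq> Suc i \<longrightarrow> Poly_Mapping.lookup \<gamma> j = Poly_Mapping.lookup \<beta> j) \<and>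
   Poly_Mapping.lookup \<gamma> i = u \<and> Poly_Mapping.lookup \<gamma> (Suc i) = v"
proof
  assume h: "setij i \<beta> u v = \<gamma>"
  have "\<And>j. Poly_Mapping.lookup \<gamma> j = (if j = i then u else if j = Suc i then v else Poly_Mapping.lookup \<beta> j)"
    by (simp add: h[symmetric] lookup_setij)
  then show "(\<forall>j. j \<noteq> i \<and> j \<noteq> Suc i \<longrightarrow> Poly_Mapping.lookup \<gamma> j = Poly_Mapping.lookup \<beta> j) \<and>
   Poly_Mapping.lookup \<gamma> i = u \<and> Poly_Mapping.lookup \<gamma> (Suc i) = v" by simp
next
  assume "(\<forall>j. j \<noteq> i \<and> j \<noteq> Suc i \<longrightarrow> Poly_Mapping.lookup \<gamma> j = Poly_Mapping.lookup \<beta> j) \<and>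
   Poly_Mapping.lookup \<gamma> i = u \<and> Poly_Mapping.lookup \<gamma> (Suc i) = v"
  then show "setij i \<beta> u v = \<gamma>"
    by (intro poly_mapping_eqI) (simp add: lookup_setij)
qed

lemma swap_setij: "swap_exp i (setij i \<beta> u v) = setij i \<beta> v u"
  by (rule poly_mapping_eqI) (auto simp: lookup_swap_exp lookup_setij swap_idx_def)

lemma setij_plus_i: "setij i \<beta> u v + Poly_Mapping.single i 1 = setij i \<beta> (Suc u) v"
  by (rule poly_mapping_eqI) (auto simp: lookup_add lookup_setij lookup_single when_def)

lemma setij_plus_Si: "setij i \<beta> u v + Poly_Mapping.single (Suc i) 1 = setij i \<beta> u (Suc v)"
  by (rule poly_mapping_eqI) (auto simp: lookup_add lookup_setij lookup_single when_def)

definition mo :: "nat \<Rightarrow> (nat \<Rightarrow>\<^sub>0 nat) \<Rightarrow> real \<Rightarrow> nat \<Rightarrow> nat \<Rightarrow> mpoly" where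
  "mo i \<beta> c u v = Poly_Mapping.single (setij i \<beta> u v) c"

lemma Var_mo: "Var i * mo i \<beta> c u v = mo i \<beta> c (Suc u) v"
  unfolding Var_def mo_def mult_single
  by (simp only: mult_1 add.commute[of "Poly_Mapping.single i 1"] setij_plus_i)

lemma VarS_mo: "Var (Suc i) * mo i \<beta> c u v = mo i \<beta> c u (Suc v)"
  unfolding Var_def mo_def mult_single
  by (simp only: mult_1 add.commute[of "Poly_Mapping.single (Suc i) 1"] setij_plus_Si)

lemma swap_mo: "swap_poly i (mo i \<beta> c u v) = mo i \<beta> c v u"
  by (simp add: mo_def swap_poly_single swap_setij)

definition pimon :: "nat \<Rightarrow> (nat \<Rightarrow>\<^sub>0 nat) \<Rightarrow> real \<Rightarrow> mpoly" where
  "pimon i \<beta> c = (let a = Poly_Mapping.lookup \<beta> i; b = Poly_Mapping.lookup \<beta> (Suc i) in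
     if b \<le> a then (\<Sum>k<Suc a - b. mo i \<beta> c (a - k) (b + k))
     else - (\<Sum>k<b - Suc a. mo i \<beta> c (b - Suc k) (Suc a + k)))"

lemma pimon_eq: "(Var i - Var (Suc i)) * pimon i \<beta> c
   = Var i * Poly_Mapping.single \<beta> c - swap_poly i (Var i * Poly_Mapping.single \<beta> c)"
proof -
  define a where "a = Poly_Mapping.lookup \<beta> i"
  define b where "b = Poly_Mapping.lookup \<beta> (Suc i)"
  have sb: "Poly_Mapping.single \<beta> c = mo i \<beta> c a b"
    by (simp add: mo_def a_def b_def setij_self)
  have rhs: "Var i * Poly_Mapping.single \<beta> c - swap_poly i (Var i * Poly_Mapping.single \<beta> c)
       = mo i \<beta> c (Suc a) b - mo i \<beta> c b (Suc a)"
    by (simp add: sb Var_mo swap_mo)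
  show ?thesis
  proof (cases "b \<le> a")
    case True
    define h where "h k = mo i \<beta> c (Suc a - k) (b + k)" for k
    have "(Var i - Var (Suc i)) * pimon i \<beta> c
        = (\<Sum>k<Suc a - b. (Var i - Var (Suc i)) * mo i \<beta> c (a - k) (b + k))"
      unfolding pimon_def Let_def a_def[symmetric] b_def[symmetric] using True
      by (simp only: if_True sum_distrib_left)
    also have "\<dots> = (\<Sum>k<Suc a - b. h k - h (Suc k))"
    proof (rule sum.cong)
      fix k assume "k \<in> {..<Suc a - b}"
      then have k: "k \<le> a" by auto
      then have "Suc a - k = Suc (a - k)" "Suc a - Suc k = a - k" by auto
      then show "(Var i - Var (Suc i)) * mo i \<beta> c (a - k) (b + k) = h k - h (Suc k)"
        by (simp add: left_diff_distrib Var_mo VarS_mo h_def)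
    qed simp
    also have "\<dots> = h 0 - h (Suc a - b)"
      by (rule sum_lessThan_telescope')
    also have "\<dots> = mo i \<beta> c (Suc a) b - mo i \<beta> c b (Suc a)"
      using True by (simp add: h_def Suc_diff_le)
    finally show ?thesis using rhs by simp
  next
    case False
    define h where "h k = mo i \<beta> c (b - k) (Suc a + k)" for k
    have "(Var i - Var (Suc i)) * pimon i \<beta> c
        = - (\<Sum>k<b - Suc a. (Var i - Var (Suc i)) * mo i \<beta> c (b - Suc k) (Suc a + k))"
      unfolding pimon_def Let_def a_def[symmetric] b_def[symmetric] using False
      by (simp only: if_False sum_distrib_left mult_minus_right)
    also have "\<dots> = - (\<Sum>k<b - Suc a. h k - h (Suc k))"
    proof (intro arg_cong[where f=uminus] sum.cong)
      fix k assume "k \<in> {..<b - Suc a}"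
      then have k: "k < b" by auto
      then have "Suc (b - Suc k) = b - k" by auto
      then show "(Var i - Var (Suc i)) * mo i \<beta> c (b - Suc k) (Suc a + k) = h k - h (Suc k)"
        by (simp add: left_diff_distrib Var_mo VarS_mo h_def)
    qed simp
    also have "\<dots> = - (h 0 - h (b - Suc a))"
      by (simp only: sum_lessThan_telescope')
    also have "\<dots> = mo i \<beta> c (Suc a) b - mo i \<beta> c b (Suc a)"
      using False by (simp add: h_def)
    finally show ?thesis using rhs by simp
  qed
qed


lemma poly_sum_single: "f = (\<Sum>\<beta>\<in>Poly_Mapping.keys f. Poly_Mapping.single \<beta> (Poly_Mapping.lookup f \<beta>))"
proof (rule poly_mapping_eqI)
  fix \<alpha>
  have "(\<Sum>\<beta>\<in>Poly_Mapping.keys f. Poly_Mapping.lookup (Poly_Mapping.single \<beta> (Poly_Mapping.lookup f \<beta>)) \<alpha>)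
      = (\<Sum>\<beta>\<in>Poly_Mapping.keys f. if \<beta> = \<alpha> then Poly_Mapping.lookup f \<beta> else 0)"
    by (rule sum.cong) (auto simp: lookup_single when_def)
  also have "\<dots> = Poly_Mapping.lookup f \<alpha>"
    by (simp add: sum.delta' in_keys_iff)
  finally show "Poly_Mapping.lookup f \<alpha> = Poly_Mapping.lookup (\<Sum>\<beta>\<in>Poly_Mapping.keys f. Poly_Mapping.single \<beta> (Poly_Mapping.lookup f \<beta>)) \<alpha>"
    by (simp add: lookup_sum)
qed

lemma Var_diff_nz: "Var i - Var (Suc i) \<noteq> 0"
proof
  assume "Var i - Var (Suc i) = 0"
  then have "Poly_Mapping.lookup (Var i - Var (Suc i)) (Poly_Mapping.single i 1) = 0" by simp
  moreover have "Poly_Mapping.single i (1::nat) \<noteq> Poly_Mapping.single (Suc i) 1"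
  proof
    assume "Poly_Mapping.single i (1::nat) = Poly_Mapping.single (Suc i) 1"
    then have "Poly_Mapping.lookup (Poly_Mapping.single i (1::nat)) i = Poly_Mapping.lookup (Poly_Mapping.single (Suc i) 1) i"
      by simp
    then show False by (simp add: lookup_single)
  qed
  ultimately show False
    by (simp add: Var_def lookup_minus lookup_single when_def)
qed

lemma pi_op_formula: "pi_op i f = (\<Sum>\<beta>\<in>Poly_Mapping.keys f. pimon i \<beta> (Poly_Mapping.lookup f \<beta>))"
proof -
  let ?g = "(\<Sum>\<beta>\<in>Poly_Mapping.keys f. pimon i \<beta> (Poly_Mapping.lookup f \<beta>))"
  let ?F = "Var i * f"
  have "(Var i - Var (Suc i)) * ?g = (\<Sum>\<beta>\<in>Poly_Mapping.keys f.
      Var i * Poly_Mapping.single \<beta> (Poly_Mapping.lookup f \<beta>) -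
      swap_poly i (Var i * Poly_Mapping.single \<beta> (Poly_Mapping.lookup f \<beta>)))"
    by (simp add: sum_distrib_left pimon_eq)
  also have "\<dots> = ?F - swap_poly i ?F"
  proof -
    have "?F - swap_poly i ?F = Var i * (\<Sum>\<beta>\<in>Poly_Mapping.keys f. Poly_Mapping.single \<beta> (Poly_Mapping.lookup f \<beta>))
       - swap_poly i (Var i * (\<Sum>\<beta>\<in>Poly_Mapping.keys f. Poly_Mapping.single \<beta> (Poly_Mapping.lookup f \<beta>)))"
      using arg_cong[OF poly_sum_single[of f], where f="\<lambda>f. Var i * f - swap_poly i (Var i * f)"] .
    then show ?thesis
      by (simp add: sum_distrib_left swap_poly_sum sum_subtractf)
  qed
  finally have eq: "(Var i - Var (Suc i)) * ?g = ?F - swap_poly i ?F" .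
  show ?thesis
    unfolding pi_op_def divdiff_def
  proof (rule the_equality)
    show "(Var i - Var (Suc i)) * ?g = ?F - swap_poly i ?F" by (rule eq)
  next
    fix g assume "(Var i - Var (Suc i)) * g = ?F - swap_poly i ?F"
    with eq have "(Var i - Var (Suc i)) * g = (Var i - Var (Suc i)) * ?g" by simp
    then show "g = ?g" using Var_diff_nz by simp
  qed
qed

definition agree :: "nat \<Rightarrow> (nat \<Rightarrow>\<^sub>0 nat) \<Rightarrow> (nat \<Rightarrow>\<^sub>0 nat) \<Rightarrow> bool" where
  "agree i \<beta> \<gamma> \<longleftrightarrow> (\<forall>j. j \<noteq> i \<and> j \<noteq> Suc i \<longrightarrow> Poly_Mapping.lookup \<gamma> j = Poly_Mapping.lookup \<beta> j) \<and>
     Poly_Mapping.lookup \<gamma> i + Poly_Mapping.lookup \<gamma> (Suc i) = Poly_Mapping.lookup \<beta> i + Poly_Mapping.lookup \<beta> (Suc i)"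

definition Pc :: "nat \<Rightarrow> (nat \<Rightarrow>\<^sub>0 nat) \<Rightarrow> (nat \<Rightarrow>\<^sub>0 nat) \<Rightarrow> real" where
  "Pc i \<beta> \<gamma> = (if agree i \<beta> \<gamma> then
     (let a = Poly_Mapping.lookup \<beta> i; b = Poly_Mapping.lookup \<beta> (Suc i); u = Poly_Mapping.lookup \<gamma> i in
      if b \<le> a then (if b \<le> u \<and> u \<le> a then 1 else 0) else (if a < u \<and> u < b then -1 else 0))
     else 0)"

lemma sum_when_unique:
  assumes "finite K" "\<And>k. k \<in> K \<Longrightarrow> P k \<longleftrightarrow> k = k0 \<and> R"
  shows "(\<Sum>k\<in>K. ((c::real) when P k)) = (if R \<and> k0 \<in> K then c else 0)"
proof -
  have "(\<Sum>k\<in>K. (c when P k)) = (\<Sum>k\<in>K. if k = k0 then (if R then c else 0) else 0)"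
    by (rule sum.cong) (auto simp: assms(2) when_def)
  also have "\<dots> = (if R \<and> k0 \<in> K then c else 0)"
    using assms(1) by (simp add: sum.delta')
  finally show ?thesis .
qed

lemma lookup_pimon: "Poly_Mapping.lookup (pimon i \<beta> c) \<gamma> = c * Pc i \<beta> \<gamma>"
proof -
  define a where "a = Poly_Mapping.lookup \<beta> i"
  define b where "b = Poly_Mapping.lookup \<beta> (Suc i)"
  define u where "u = Poly_Mapping.lookup \<gamma> i"
  define v where "v = Poly_Mapping.lookup \<gamma> (Suc i)"
  define ag where "ag = (\<forall>j. j \<noteq> i \<and> j \<noteq> Suc i \<longrightarrow> Poly_Mapping.lookup \<gamma> j = Poly_Mapping.lookup \<beta> j)"
  have agr: "agree i \<beta> \<gamma> \<longleftrightarrow> ag \<and> u + v = a + b"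
    by (simp add: agree_def ag_def a_def b_def u_def v_def)
  show ?thesis
  proof (cases "b \<le> a")
    case True
    have "Poly_Mapping.lookup (pimon i \<beta> c) \<gamma> = (\<Sum>k<Suc a - b. (c when setij i \<beta> (a - k) (b + k) = \<gamma>))"
      unfolding pimon_def Let_def a_def[symmetric] b_def[symmetric] using True
      by (simp add: lookup_sum mo_def lookup_single)
    also have "\<dots> = (if (ag \<and> u + v = a + b \<and> b \<le> u \<and> u \<le> a) \<and> a - u \<in> {..<Suc a - b} then c else 0)"
      by (rule sum_when_unique) (auto simp: setij_eq_iff ag_def u_def[symmetric] v_def[symmetric])
    also have "\<dots> = c * Pc i \<beta> \<gamma>"
      using True unfolding Pc_def agr Let_def a_def[symmetric] b_def[symmetric] u_def[symmetric]
      by auto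
    finally show ?thesis .
  next
    case False
    have "Poly_Mapping.lookup (pimon i \<beta> c) \<gamma> = - (\<Sum>k<b - Suc a. (c when setij i \<beta> (b - Suc k) (Suc a + k) = \<gamma>))"
      unfolding pimon_def Let_def a_def[symmetric] b_def[symmetric] using False
      by (simp add: lookup_sum mo_def lookup_single)
    also have "(\<Sum>k<b - Suc a. (c when setij i \<beta> (b - Suc k) (Suc a + k) = \<gamma>))
       = (if (ag \<and> u + v = a + b \<and> a < u \<and> u < b) \<and> b - Suc u \<in> {..<b - Suc a} then c else 0)"
      by (rule sum_when_unique) (auto simp: setij_eq_iff ag_def u_def[symmetric] v_def[symmetric])
    also have "- \<dots> = c * Pc i \<beta> \<gamma>"
      using False unfolding Pc_def agr Let_def a_def[symmetric] b_def[symmetric] u_def[symmetric]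
      by auto
    finally show ?thesis .
  qed
qed

lemma lookup_pi_op: "Poly_Mapping.lookup (pi_op i f) \<gamma> =
   (\<Sum>\<beta>\<in>Poly_Mapping.keys f. Poly_Mapping.lookup f \<beta> * Pc i \<beta> \<gamma>)"
  by (simp add: pi_op_formula lookup_sum lookup_pimon)


definition vecb :: "(nat \<Rightarrow>\<^sub>0 nat) \<Rightarrow> (nat \<Rightarrow> real)" where
  "vecb \<beta> = (\<lambda>j. real (Poly_Mapping.lookup \<beta> j))"

lemma vecb_exps: "vecb (exps \<sigma>) = perm_vec \<sigma>"
  by (auto simp: vecb_def perm_vec_def lookup_exps fun_eq_iff)

lemma vecb_swap: "vecb (swap_exp i \<beta>) = vecb \<beta> \<circ> swap_idx i"
  by (auto simp: vecb_def lookup_swap_exp fun_eq_iff)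

lemma exps_swp: "Suc i < length \<sigma> \<Longrightarrow> exps (swp i \<sigma>) = swap_exp i (exps \<sigma>)"
  by (rule poly_mapping_eqI)
     (auto simp: lookup_exps lookup_swap_exp nth_swp swap_idx_less, auto simp: swap_idx_def)

lemma perm_vec_swp: "Suc i < length \<sigma> \<Longrightarrow> perm_vec (swp i \<sigma>) = perm_vec \<sigma> \<circ> swap_idx i"
  by (metis exps_swp vecb_exps vecb_swap)

lemma Pc_nz:
  assumes "Pc i \<beta> \<gamma> \<noteq> 0"
  shows "agree i \<beta> \<gamma> \<and>
    (min (Poly_Mapping.lookup \<beta> i) (Poly_Mapping.lookup \<beta> (Suc i)) \<le> Poly_Mapping.lookup \<gamma> i) \<and>
    (Poly_Mapping.lookup \<gamma> i \<le> max (Poly_Mapping.lookup \<beta> i) (Poly_Mapping.lookup \<beta> (Suc i)))"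
  using assms unfolding Pc_def Let_def by (auto split: if_splits)

lemma segment:
  assumes "Pc i \<beta> \<gamma> \<noteq> 0"
  shows "\<exists>t. 0 \<le> t \<and> t \<le> 1 \<and> vecb \<gamma> = (\<lambda>j. t * vecb \<beta> j + (1 - t) * (vecb \<beta> \<circ> swap_idx i) j)"
proof -
  define a where "a = Poly_Mapping.lookup \<beta> i"
  define b where "b = Poly_Mapping.lookup \<beta> (Suc i)"
  define u where "u = Poly_Mapping.lookup \<gamma> i"
  define v where "v = Poly_Mapping.lookup \<gamma> (Suc i)"
  have ag: "\<And>j. j \<noteq> i \<Longrightarrow> j \<noteq> Suc i \<Longrightarrow> Poly_Mapping.lookup \<gamma> j = Poly_Mapping.lookup \<beta> j"
    and uv: "u + v = a + b" and mn: "min a b \<le> u" "u \<le> max a b"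
    using Pc_nz[OF assms] by (auto simp: agree_def a_def b_def u_def v_def)
  show ?thesis
  proof (cases "a = b")
    case True
    then have "u = a" "v = b" using uv mn by auto
    then have "Poly_Mapping.lookup \<gamma> j = Poly_Mapping.lookup \<beta> j" for j
      using ag[of j] by (cases "j = i"; cases "j = Suc i") (auto simp: a_def b_def u_def v_def)
    then have "vecb \<gamma> = vecb \<beta>" by (simp add: vecb_def)
    then show ?thesis by (intro exI[of _ 1]) auto
  next
    case False
    define t where "t = (real u - real b) / (real a - real b)"
    have ab: "real a - real b \<noteq> 0" using False by simp
    have t01: "0 \<le> t \<and> t \<le> 1"
    proof (cases "a < b")
      case True
      then have "real a \<le> real u" "real u \<le> real b" using mn by auto
      then show ?thesis using True by (auto simp: t_def divide_simps)
    next
      case False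
      then have "real b \<le> real u" "real u \<le> real a" using mn by auto
      then show ?thesis using False \<open>a \<noteq> b\<close> by (auto simp: t_def divide_simps)
    qed
    have h: "t * (real a - real b) = real u - real b" using ab by (simp add: t_def)
    then have h2: "t * real a - t * real b = real u - real b" by (simp add: right_diff_distrib)
    have ru: "real u = t * real a + (1 - t) * real b"
      unfolding left_diff_distrib using h2 by simp
    have rv: "real v = t * real b + (1 - t) * real a"
    proof -
      have "real v = real a + real b - real u" using uv by (simp add: algebra_simps flip: of_nat_add)
      then show ?thesis using ru by (simp add: algebra_simps)
    qed
    have "vecb \<gamma> = (\<lambda>j. t * vecb \<beta> j + (1 - t) * (vecb \<beta> \<circ> swap_idx i) j)"
    proof
      fix j
      show "vecb \<gamma> j = t * vecb \<beta> j + (1 - t) * (vecb \<beta> \<circ> swap_idx i) j"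
        using ru rv ag[of j]
        by (cases "j = i"; cases "j = Suc i")
           (auto simp: vecb_def swap_idx_def a_def b_def u_def v_def algebra_simps)
    qed
    then show ?thesis using t01 by blast
  qed
qed


definition topsum :: "nat \<Rightarrow> nat \<Rightarrow> nat" where
  "topsum n k = (\<Sum>v\<in>{Suc n - k..n}. v)"

definition Inv :: "nat \<Rightarrow> (nat \<Rightarrow>\<^sub>0 nat) \<Rightarrow> bool" where
  "Inv n \<beta> \<longleftrightarrow> (\<forall>S \<subseteq> {..<n}. (\<Sum>j\<in>S. Poly_Mapping.lookup \<beta> j) \<le> topsum n (card S))"

lemma subset_sum: "A \<subseteq> {1..n} \<Longrightarrow> \<Sum>A \<le> topsum n (card A)"
proof (induction n arbitrary: A)
  case 0
  then have "A = {}" by auto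
  then show ?case by simp
next
  case (Suc n)
  have fA: "finite A" using Suc.prems finite_subset by blast
  show ?case
  proof (cases "Suc n \<in> A")
    case True
    define A' where "A' = A - {Suc n}"
    have A': "A' \<subseteq> {1..n}" using Suc.prems by (auto simp: A'_def)
    have cA: "card A = Suc (card A')" using True fA by (metis A'_def card_Suc_Diff1)
    have "\<Sum>A = Suc n + \<Sum>A'" using True fA by (simp add: A'_def sum.remove)
    also have "\<dots> \<le> Suc n + topsum n (card A')" using Suc.IH[OF A'] by simp
    also have "\<dots> = topsum (Suc n) (card A)"
    proof -
      have "Suc n - card A' \<le> Suc n" by simp
      then have "{Suc (Suc n) - card A..Suc n} = insert (Suc n) {Suc n - card A'..n}"
        using cA by auto
      then show ?thesis unfolding topsum_def by simp
    qed
    finally show ?thesis .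
  next
    case False
    have A: "A \<subseteq> {1..n}"
    proof
      fix x assume x: "x \<in> A"
      then have "x \<in> {1..Suc n}" using Suc.prems by blast
      moreover have "x \<noteq> Suc n" using x False by auto
      ultimately show "x \<in> {1..n}" by auto
    qed
    then have k: "card A \<le> n" using card_mono[OF _ A] by simp
    have "\<Sum>A \<le> topsum n (card A)" using Suc.IH[OF A] .
    also have "\<dots> \<le> (\<Sum>v\<in>{Suc n - card A..n}. Suc v)" unfolding topsum_def by (rule sum_mono) simp
    also have "\<dots> = topsum (Suc n) (card A)"
    proof -
      have e: "Suc (Suc n) - card A = Suc (Suc n - card A)" using k by simp
      have "topsum (Suc n) (card A) = (\<Sum>v\<in>{Suc (Suc n - card A)..Suc n}. v)"
        by (simp only: topsum_def e)
      also have "\<dots> = (\<Sum>v\<in>{Suc n - card A..n}. Suc v)"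
        by (rule sum.shift_bounds_cl_Suc_ivl)
      finally show ?thesis by simp
    qed
    finally show ?thesis .
  qed
qed

lemma Inv_perm: assumes "a \<in> perms n" shows "Inv n (exps a)"
  unfolding Inv_def
proof (intro allI impI)
  fix S assume S: "S \<subseteq> {..<n}"
  have l: "length a = n" using assms by (rule perms_length)
  have dist: "distinct a" using assms by (simp add: perms_def)
  have inj: "inj_on ((!) a) S"
    by (intro inj_onI) (metis S l lessThan_iff nth_eq_iff_index_eq subsetD dist)
  have "(\<Sum>j\<in>S. Poly_Mapping.lookup (exps a) j) = (\<Sum>j\<in>S. a ! j)"
    using S l by (intro sum.cong) (auto simp: lookup_exps)
  also have "\<dots> = \<Sum>((!) a ` S)" using inj by (simp add: sum.reindex)
  also have "\<dots> \<le> topsum n (card ((!) a ` S))"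
  proof (rule subset_sum, rule subsetI)
    fix v assume "v \<in> (!) a ` S"
    then obtain j where j: "j \<in> S" "v = a ! j" by blast
    then have "a ! j \<in> set a" using S l by (intro nth_mem) auto
    then show "v \<in> {1..n}" using assms j by (simp add: perms_def)
  qed
  also have "card ((!) a ` S) = card S" using inj by (simp add: card_image)
  finally show "(\<Sum>j\<in>S. Poly_Mapping.lookup (exps a) j) \<le> topsum n (card S)" .
qed

lemma sum_split3:
  assumes "finite S"
  shows "(\<Sum>j\<in>S. f j) = (\<Sum>j\<in>S - {i, Suc i}. f j) + (if i \<in> S then f i else 0) + (if Suc i \<in> S then f (Suc i) else 0)"
proof -
  have "S = (S - {i, Suc i}) \<union> (S \<inter> {i}) \<union> (S \<inter> {Suc i})" by auto
  then have "(\<Sum>j\<in>S. f j) = (\<Sum>j\<in>(S - {i, Suc i}) \<union> (S \<inter> {i}) \<union> (S \<inter> {Suc i}). f j)" by simp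
  also have "\<dots> = (\<Sum>j\<in>S - {i, Suc i}. f j) + (\<Sum>j\<in>S \<inter> {i}. f j) + (\<Sum>j\<in>S \<inter> {Suc i}. f j)"
    using assms by (subst sum.union_disjoint; auto)+
  also have "(\<Sum>j\<in>S \<inter> {i}. f j) = (if i \<in> S then f i else 0)" by auto
  also have "(\<Sum>j\<in>S \<inter> {Suc i}. f j) = (if Suc i \<in> S then f (Suc i) else 0)" by auto
  finally show ?thesis .
qed

lemma Inv_step:
  assumes inv: "Inv n \<beta>" and i: "Suc i < n" and P: "Pc i \<beta> \<gamma> \<noteq> 0"
  shows "Inv n \<gamma>"
  unfolding Inv_def
proof (intro allI impI)
  fix S assume S: "S \<subseteq> {..<n}"
  have fS: "finite S" using S finite_subset by blast
  define a where "a = Poly_Mapping.lookup \<beta> i"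
  define b where "b = Poly_Mapping.lookup \<beta> (Suc i)"
  define u where "u = Poly_Mapping.lookup \<gamma> i"
  define v where "v = Poly_Mapping.lookup \<gamma> (Suc i)"
  have ag: "\<And>j. j \<noteq> i \<Longrightarrow> j \<noteq> Suc i \<Longrightarrow> Poly_Mapping.lookup \<gamma> j = Poly_Mapping.lookup \<beta> j"
    and uv: "u + v = a + b" and mn: "min a b \<le> u" "u \<le> max a b"
    using Pc_nz[OF P] by (auto simp: agree_def a_def b_def u_def v_def)
  have v1: "v \<le> max a b" using uv mn by auto
  define R where "R = (\<Sum>j\<in>S - {i, Suc i}. Poly_Mapping.lookup \<beta> j)"
  have Rg: "(\<Sum>j\<in>S - {i, Suc i}. Poly_Mapping.lookup \<gamma> j) = R"
    unfolding R_def by (rule sum.cong) (auto simp: ag)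
  have sg: "(\<Sum>j\<in>S. Poly_Mapping.lookup \<gamma> j) = R + (if i \<in> S then u else 0) + (if Suc i \<in> S then v else 0)"
  proof -
    have "(\<Sum>j\<in>S. Poly_Mapping.lookup \<gamma> j) = (\<Sum>j\<in>S - {i, Suc i}. Poly_Mapping.lookup \<gamma> j) + (if i \<in> S then u else 0) + (if Suc i \<in> S then v else 0)"
      unfolding u_def v_def by (rule sum_split3[OF fS])
    then show ?thesis by (simp only: Rg)
  qed
  have sb: "\<And>T. T \<subseteq> {..<n} \<Longrightarrow> (\<Sum>j\<in>T. Poly_Mapping.lookup \<beta> j) \<le> topsum n (card T)"
    using inv by (simp add: Inv_def)
  have sbS: "R + (if i \<in> S then a else 0) + (if Suc i \<in> S then b else 0) \<le> topsum n (card S)"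
  proof -
    have "(\<Sum>j\<in>S. Poly_Mapping.lookup \<beta> j) = R + (if i \<in> S then a else 0) + (if Suc i \<in> S then b else 0)"
      unfolding R_def a_def b_def by (rule sum_split3[OF fS])
    then show ?thesis using sb[OF S] by simp
  qed
  show "(\<Sum>j\<in>S. Poly_Mapping.lookup \<gamma> j) \<le> topsum n (card S)"
  proof (cases "i \<in> S \<longleftrightarrow> Suc i \<in> S")
    case True
    then show ?thesis using sg sbS uv by (cases "i \<in> S") auto
  next
    case False
    define S' where "S' = (S - {i, Suc i}) \<union> (if i \<in> S then {Suc i} else {i})"
    have S'n: "S' \<subseteq> {..<n}" using S i by (auto simp: S'_def)
    have fS': "finite S'" using fS by (simp add: S'_def)
    have cS': "card S' = card S"
    proof -
      have "card S' = card (S - {i, Suc i}) + 1"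
        unfolding S'_def using fS by (subst card_Un_disjoint) auto
      moreover have "card S = card (S - {i, Suc i}) + 1"
      proof -
        have "S = (S - {i, Suc i}) \<union> (if i \<in> S then {i} else {Suc i})" using False by auto
        then have "card S = card ((S - {i, Suc i}) \<union> (if i \<in> S then {i} else {Suc i}))" by simp
        also have "\<dots> = card (S - {i, Suc i}) + 1" using fS by (subst card_Un_disjoint) auto
        finally show ?thesis .
      qed
      ultimately show ?thesis by simp
    qed
    have "(\<Sum>j\<in>S'. Poly_Mapping.lookup \<beta> j) = R + (if i \<in> S' then a else 0) + (if Suc i \<in> S' then b else 0)"
    proof -
      have "S' - {i, Suc i} = S - {i, Suc i}" by (auto simp: S'_def)
      have "(\<Sum>j\<in>S'. Poly_Mapping.lookup \<beta> j) = (\<Sum>j\<in>S' - {i, Suc i}. Poly_Mapping.lookup \<beta> j) + (if i \<in> S' then a else 0) + (if Suc i \<in> S' then b else 0)"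
        unfolding a_def b_def by (rule sum_split3[OF fS'])
      then show ?thesis using \<open>S' - {i, Suc i} = S - {i, Suc i}\<close> by (simp add: R_def)
    qed
    then have sbS': "R + (if i \<in> S' then a else 0) + (if Suc i \<in> S' then b else 0) \<le> topsum n (card S)"
      using sb[OF S'n] cS' by simp
    have iS': "i \<in> S' \<longleftrightarrow> \<not> i \<in> S" "Suc i \<in> S' \<longleftrightarrow> i \<in> S" using False by (auto simp: S'_def)
    show ?thesis
      using sg sbS sbS' iS' False mn v1 by (cases "i \<in> S") (auto simp: max_def split: if_splits)
  qed
qed


lemma lookup_exps_lt: "j < length \<sigma> \<Longrightarrow> Poly_Mapping.lookup (exps \<sigma>) j = \<sigma> ! j"
  by (simp add: lookup_exps)

lemma inv_pin:
  assumes inv: "Inv n \<beta>" and sp: "\<sigma> \<in> perms n" and i: "Suc i < n" and P: "Pc i \<beta> (exps \<sigma>) \<noteq> 0"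
  shows "\<beta> = exps \<sigma> \<or> \<beta> = swap_exp i (exps \<sigma>)"
proof -
  have l: "length \<sigma> = n" using sp by (rule perms_length)
  have dist: "distinct \<sigma>" and setn: "set \<sigma> = {1..n}" using sp by (auto simp: perms_def)
  define a where "a = Poly_Mapping.lookup \<beta> i"
  define b where "b = Poly_Mapping.lookup \<beta> (Suc i)"
  define u where "u = \<sigma> ! i"
  define v where "v = \<sigma> ! Suc i"
  have ui: "Poly_Mapping.lookup (exps \<sigma>) i = u" "Poly_Mapping.lookup (exps \<sigma>) (Suc i) = v"
    using i l by (auto simp: lookup_exps u_def v_def)
  have ag: "\<And>j. j \<noteq> i \<Longrightarrow> j \<noteq> Suc i \<Longrightarrow> Poly_Mapping.lookup (exps \<sigma>) j = Poly_Mapping.lookup \<beta> j"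
    and uv: "u + v = a + b" and mn: "min a b \<le> u" "u \<le> max a b"
    using Pc_nz[OF P] ui by (auto simp: agree_def a_def b_def)
  have uneq: "u \<noteq> v" using dist i l by (simp add: u_def v_def nth_eq_iff_index_eq)
  define m where "m = max u v"
  have mset: "m \<in> set \<sigma>" using i l by (auto simp: m_def u_def v_def max_def)
  then have m1: "1 \<le> m" "m \<le> n" using setn by auto
  define S0 where "S0 = {j. j < n \<and> j \<noteq> i \<and> j \<noteq> Suc i \<and> m < \<sigma> ! j}"
  have S0n: "S0 \<subseteq> {..<n}" by (auto simp: S0_def)
  have fS0: "finite S0" using S0n finite_subset by blast
  have inj: "inj_on ((!) \<sigma>) S0"
    by (intro inj_onI) (metis S0n l lessThan_iff nth_eq_iff_index_eq subsetD dist)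
  have img: "(!) \<sigma> ` S0 = {Suc m..n}"
  proof
    show "(!) \<sigma> ` S0 \<subseteq> {Suc m..n}"
    proof
      fix x assume "x \<in> (!) \<sigma> ` S0"
      then obtain j where j: "j \<in> S0" "x = \<sigma> ! j" by blast
      then have "\<sigma> ! j \<in> set \<sigma>" using l by (auto simp: S0_def)
      then show "x \<in> {Suc m..n}" using j setn by (auto simp: S0_def)
    qed
  next
    show "{Suc m..n} \<subseteq> (!) \<sigma> ` S0"
    proof
      fix x assume x: "x \<in> {Suc m..n}"
      then have "x \<in> set \<sigma>" using setn m1 by auto
      then obtain j where j: "j < n" "\<sigma> ! j = x" using l by (auto simp: in_set_conv_nth)
      have "j \<noteq> i" "j \<noteq> Suc i" using j x by (auto simp: m_def u_def v_def)
      then have "j \<in> S0" using j x by (auto simp: S0_def)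
      then show "x \<in> (!) \<sigma> ` S0" using j by blast
    qed
  qed
  have cS0: "card S0 = n - m"
    using card_image[OF inj] img by simp
  have sS0: "(\<Sum>j\<in>S0. Poly_Mapping.lookup \<beta> j) = \<Sum>{Suc m..n}"
  proof -
    have "(\<Sum>j\<in>S0. Poly_Mapping.lookup \<beta> j) = (\<Sum>j\<in>S0. \<sigma> ! j)"
      by (rule sum.cong) (auto simp: S0_def ag[symmetric] lookup_exps l)
    also have "\<dots> = \<Sum>((!) \<sigma> ` S0)" using inj by (simp add: sum.reindex)
    finally show ?thesis using img by simp
  qed
  have top: "topsum n (Suc (n - m)) = m + \<Sum>{Suc m..n}"
  proof -
    have "Suc n - Suc (n - m) = m" using m1 by simp
    then have "topsum n (Suc (n - m)) = \<Sum>{m..n}" by (simp add: topsum_def)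
    also have "{m..n} = insert m {Suc m..n}" using m1 by auto
    finally show ?thesis by simp
  qed
  have bound: "Poly_Mapping.lookup \<beta> x \<le> m" if x: "x = i \<or> x = Suc i" for x
  proof -
    have xS0: "x \<notin> S0" using x by (auto simp: S0_def)
    have T: "insert x S0 \<subseteq> {..<n}" using x i S0n by auto
    have "(\<Sum>j\<in>insert x S0. Poly_Mapping.lookup \<beta> j) \<le> topsum n (card (insert x S0))"
      using inv T by (simp add: Inv_def)
    then have "Poly_Mapping.lookup \<beta> x + \<Sum>{Suc m..n} \<le> m + \<Sum>{Suc m..n}"
      using xS0 fS0 sS0 cS0 top by simp
    then show ?thesis by simp
  qed
  have am: "a \<le> m" "b \<le> m" using bound by (auto simp: a_def b_def)
  have vle: "v \<le> max a b" using uv mn by auto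
  have mx: "max a b = m" using am mn vle by (auto simp: m_def)
  have look_eq: "Poly_Mapping.lookup \<beta> j = Poly_Mapping.lookup (exps \<sigma>) j" if "j \<noteq> i" "j \<noteq> Suc i" for j
    using ag that by simp
  show ?thesis
  proof (cases "a = u")
    case True
    then have "b = v" using uv by simp
    then have "\<beta> = exps \<sigma>"
      using True look_eq ui by (intro poly_mapping_eqI) (metis a_def b_def)
    then show ?thesis ..
  next
    case False
    then have "a = v \<and> b = u" using uv mx uneq am by (auto simp: m_def max_def split: if_splits)
    then have "\<beta> = swap_exp i (exps \<sigma>)"
      using look_eq ui
      by (intro poly_mapping_eqI) (auto simp: lookup_swap_exp swap_idx_def a_def b_def)
    then show ?thesis ..
  qed
qed

lemma Pc_self: "Pc i \<beta> \<beta> = (if Poly_Mapping.lookup \<beta> (Suc i) \<le> Poly_Mapping.lookup \<beta> i then 1 else 0)"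
  by (simp add: Pc_def agree_def Let_def)

lemma Pc_swap: "Pc i \<beta> (swap_exp i \<beta>) = (if Poly_Mapping.lookup \<beta> (Suc i) \<le> Poly_Mapping.lookup \<beta> i then 1 else 0)"
  by (auto simp: Pc_def agree_def Let_def lookup_swap_exp swap_idx_def)


definition Prp :: "nat \<Rightarrow> mpoly \<Rightarrow> nat list \<Rightarrow> bool" where
  "Prp n f a \<longleftrightarrow> (\<forall>\<beta>\<in>Poly_Mapping.keys f. vecb \<beta> \<in> conv (perm_vec ` {\<sigma>. bruhat_le a \<sigma>})) \<and>
     (\<forall>\<beta>\<in>Poly_Mapping.keys f. Inv n \<beta>) \<and>
     (\<forall>\<sigma>. bruhat_le a \<sigma> \<longrightarrow> Poly_Mapping.lookup f (exps \<sigma>) = 1)"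

lemma base_case:
  assumes "a \<in> perms n" "sorted_wrt (\<ge>) a"
  shows "Prp n (monom a) a"
proof -
  have k: "Poly_Mapping.keys (monom a) = {exps a}" by (simp add: monom_def)
  have "vecb (exps a) \<in> conv (perm_vec ` {\<sigma>. bruhat_le a \<sigma>})"
    by (rule conv_single) (auto simp: vecb_exps)
  moreover have "Inv n (exps a)" using assms(1) by (rule Inv_perm)
  moreover have "\<forall>\<sigma>. bruhat_le a \<sigma> \<longrightarrow> Poly_Mapping.lookup (monom a) (exps \<sigma>) = 1"
  proof (intro allI impI)
    fix \<sigma> assume "bruhat_le a \<sigma>"
    then have "\<sigma> = a" using sorted_top[OF assms(2)] by blast
    then show "Poly_Mapping.lookup (monom a) (exps \<sigma>) = 1" by (simp add: monom_def)
  qed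
  ultimately show ?thesis unfolding Prp_def k by auto
qed

lemma perm_le: "a \<in> perms n \<Longrightarrow> bruhat_le a \<sigma> \<Longrightarrow> \<sigma> \<in> perms n"
  using le_inv[of a \<sigma>] by (auto simp: perms_def)

lemma step_case:
  assumes ap: "a \<in> perms n" and i: "Suc i < length a" and asc: "a ! i < a ! Suc i"
    and IH: "Prp n f (swp i a)"
  shows "Prp n (pi_op i f) a"
proof -
  have l: "length a = n" using ap by (rule perms_length)
  have in_: "Suc i < n" using i l by simp
  have da: "distinct a" using ap by (simp add: perms_def)
  have st: "bruhat_step a (swp i a)" using i asc by (rule asc_step)
  have IH1: "\<And>\<beta>. \<beta> \<in> Poly_Mapping.keys f \<Longrightarrow> vecb \<beta> \<in> conv (perm_vec ` {\<sigma>. bruhat_le (swp i a) \<sigma>})"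
    and IH2: "\<And>\<beta>. \<beta> \<in> Poly_Mapping.keys f \<Longrightarrow> Inv n \<beta>"
    and IH3: "\<And>\<sigma>. bruhat_le (swp i a) \<sigma> \<Longrightarrow> Poly_Mapping.lookup f (exps \<sigma>) = 1"
    using IH by (auto simp: Prp_def)
  have ex: "\<exists>\<beta>'\<in>Poly_Mapping.keys f. Pc i \<beta>' \<beta> \<noteq> 0" if "\<beta> \<in> Poly_Mapping.keys (pi_op i f)" for \<beta>
  proof (rule ccontr)
    assume "\<not> ?thesis"
    then have "(\<Sum>\<beta>'\<in>Poly_Mapping.keys f. Poly_Mapping.lookup f \<beta>' * Pc i \<beta>' \<beta>) = 0"
      by (intro sum.neutral) auto
    then show False using that by (simp add: lookup_pi_op in_keys_iff)
  qed
  have P1: "vecb \<beta> \<in> conv (perm_vec ` {\<sigma>. bruhat_le a \<sigma>})" if b: "\<beta> \<in> Poly_Mapping.keys (pi_op i f)" for \<beta>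
  proof -
    obtain \<beta>' where b': "\<beta>' \<in> Poly_Mapping.keys f" "Pc i \<beta>' \<beta> \<noteq> 0" using ex[OF b] by blast
    obtain t where t: "0 \<le> t" "t \<le> 1" "vecb \<beta> = (\<lambda>j. t * vecb \<beta>' j + (1 - t) * (vecb \<beta>' \<circ> swap_idx i) j)"
      using segment[OF b'(2)] by blast
    have sub1: "perm_vec ` {\<sigma>. bruhat_le (swp i a) \<sigma>} \<subseteq> perm_vec ` {\<sigma>. bruhat_le a \<sigma>}"
      using st by (auto intro: ble_trans step_le)
    have sub2: "(\<lambda>y. y \<circ> swap_idx i) ` perm_vec ` {\<sigma>. bruhat_le (swp i a) \<sigma>} \<subseteq> perm_vec ` {\<sigma>. bruhat_le a \<sigma>}"
    proof
      fix x assume "x \<in> (\<lambda>y. y \<circ> swap_idx i) ` perm_vec ` {\<sigma>. bruhat_le (swp i a) \<sigma>}"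
      then obtain \<sigma> where \<sigma>: "bruhat_le (swp i a) \<sigma>" "x = perm_vec \<sigma> \<circ> swap_idx i" by blast
      have "length \<sigma> = length a" using le_inv[OF \<sigma>(1)] by simp
      then have "x = perm_vec (swp i \<sigma>)" using \<sigma>(2) i by (simp add: perm_vec_swp)
      moreover have "bruhat_le a (swp i \<sigma>)" using L2[OF da i asc \<sigma>(1)] .
      ultimately show "x \<in> perm_vec ` {\<sigma>. bruhat_le a \<sigma>}" by blast
    qed
    have x1: "vecb \<beta>' \<in> conv (perm_vec ` {\<sigma>. bruhat_le a \<sigma>})"
      using conv_mono[OF sub1] IH1[OF b'(1)] by blast
    have x2: "vecb \<beta>' \<circ> swap_idx i \<in> conv (perm_vec ` {\<sigma>. bruhat_le a \<sigma>})"
      using conv_mono[OF sub2] conv_comp[OF IH1[OF b'(1)]] by blast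
    show ?thesis using conv_convex[OF x1 x2 t(1,2)] t(3) by simp
  qed
  have P2: "Inv n \<beta>" if b: "\<beta> \<in> Poly_Mapping.keys (pi_op i f)" for \<beta>
  proof -
    obtain \<beta>' where b': "\<beta>' \<in> Poly_Mapping.keys f" "Pc i \<beta>' \<beta> \<noteq> 0" using ex[OF b] by blast
    show ?thesis using Inv_step[OF IH2[OF b'(1)] in_ b'(2)] .
  qed
  have P3: "Poly_Mapping.lookup (pi_op i f) (exps \<sigma>) = 1" if \<sigma>: "bruhat_le a \<sigma>" for \<sigma>
  proof -
    have sp: "\<sigma> \<in> perms n" using perm_le[OF ap \<sigma>] .
    have ls: "length \<sigma> = n" using sp by (rule perms_length)
    have ds: "distinct \<sigma>" using sp by (simp add: perms_def)
    have ne: "\<sigma> ! i \<noteq> \<sigma> ! Suc i" using ds ls in_ by (simp add: nth_eq_iff_index_eq)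
    define D where "D = Dm i \<sigma>"
    have D1: "bruhat_le (swp i a) D" unfolding D_def using L1[OF da i asc \<sigma>] .
    have fD: "Poly_Mapping.lookup f (exps D) = 1" using IH3[OF D1] .
    have eS: "exps (swp i \<sigma>) = swap_exp i (exps \<sigma>)" using ls in_ by (simp add: exps_swp)
    have li: "Poly_Mapping.lookup (exps \<sigma>) i = \<sigma> ! i" "Poly_Mapping.lookup (exps \<sigma>) (Suc i) = \<sigma> ! Suc i"
      using ls in_ by (auto simp: lookup_exps)
    have lsi: "Poly_Mapping.lookup (swap_exp i (exps \<sigma>)) i = \<sigma> ! Suc i"
      "Poly_Mapping.lookup (swap_exp i (exps \<sigma>)) (Suc i) = \<sigma> ! i"
      using li by (auto simp: lookup_swap_exp swap_idx_def)
    have pt: "Poly_Mapping.lookup f \<beta>' * Pc i \<beta>' (exps \<sigma>) = (if \<beta>' = exps D then Poly_Mapping.lookup f \<beta>' else 0)"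
      if b': "\<beta>' \<in> Poly_Mapping.keys f" for \<beta>'
    proof (cases "\<beta>' = exps D")
      case True
      have "Pc i \<beta>' (exps \<sigma>) = 1"
      proof (cases "\<sigma> ! Suc i < \<sigma> ! i")
        case True
        then show ?thesis using \<open>\<beta>' = exps D\<close> li by (simp add: D_def Dm_def Pc_self)
      next
        case False
        then have "\<beta>' = swap_exp i (exps \<sigma>)" using \<open>\<beta>' = exps D\<close> eS by (simp add: D_def Dm_def)
        moreover have "Pc i (swap_exp i (exps \<sigma>)) (exps \<sigma>) = (if \<sigma> ! i \<le> \<sigma> ! Suc i then 1 else 0)"
          using Pc_swap[of i "swap_exp i (exps \<sigma>)"] lsi by simp
        ultimately show ?thesis using False ne by simp
      qed
      then show ?thesis using True by simp
    next
      case False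
      have "Pc i \<beta>' (exps \<sigma>) = 0"
      proof (rule ccontr)
        assume nz: "Pc i \<beta>' (exps \<sigma>) \<noteq> 0"
        have "\<beta>' = exps \<sigma> \<or> \<beta>' = swap_exp i (exps \<sigma>)" using inv_pin[OF IH2[OF b'] sp in_ nz] .
        then show False
        proof
          assume e: "\<beta>' = exps \<sigma>"
          then have "\<not> \<sigma> ! Suc i < \<sigma> ! i" using False by (auto simp: D_def Dm_def)
          then show False using nz e li ne by (simp add: Pc_self)
        next
          assume e: "\<beta>' = swap_exp i (exps \<sigma>)"
          then have "\<sigma> ! Suc i < \<sigma> ! i" using False eS by (auto simp: D_def Dm_def split: if_splits)
          moreover have "Pc i (swap_exp i (exps \<sigma>)) (exps \<sigma>) = (if \<sigma> ! i \<le> \<sigma> ! Suc i then 1 else 0)"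
            using Pc_swap[of i "swap_exp i (exps \<sigma>)"] lsi by simp
          ultimately show False using nz e by simp
        qed
      qed
      then show ?thesis using False by simp
    qed
    have "Poly_Mapping.lookup (pi_op i f) (exps \<sigma>)
        = (\<Sum>\<beta>'\<in>Poly_Mapping.keys f. if \<beta>' = exps D then Poly_Mapping.lookup f \<beta>' else 0)"
      unfolding lookup_pi_op by (rule sum.cong) (auto simp: pt)
    also have "\<dots> = Poly_Mapping.lookup f (exps D)"
      using fD by (simp add: sum.delta' in_keys_iff)
    finally show ?thesis using fD by simp
  qed
  show ?thesis unfolding Prp_def using P1 P2 P3 by blast
qed

lemma main_ind: "a \<in> perms n \<Longrightarrow> n_asc a \<le> k \<Longrightarrow> Prp n (key_aux k a) a"
proof (induction k arbitrary: a)
  case 0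
  then have "sorted_wrt (\<ge>) a" using n_asc_zero_sorted by simp
  then show ?case using base_case[OF 0(1)] by simp
next
  case (Suc k)
  show ?case
  proof (cases "sorted_wrt (\<ge>) a")
    case True
    then show ?thesis using base_case[OF Suc.prems(1)] by simp
  next
    case False
    define i where "i = (LEAST i. Suc i < length a \<and> a ! i < a ! Suc i)"
    have i: "Suc i < length a" "a ! i < a ! Suc i"
      using LeastI_ex[OF not_sorted_asc[OF False]] unfolding i_def by auto
    have sa: "swp i a \<in> perms n" using Suc.prems(1) i by (simp add: perms_def distinct_swp set_swp)
    have "n_asc (swp i a) \<le> k" using n_asc_swp[OF i] Suc.prems(2) by simp
    then have "Prp n (key_aux k (swp i a)) (swp i a)" using Suc.IH[OF sa] by simp
    then have "Prp n (pi_op i (key_aux k (swp i a))) a" using step_case[OF Suc.prems(1) i] by simp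
    then show ?thesis using False by (simp add: i_def[symmetric] swp_def Let_def)
  qed
qed

theorem corollary1p3:
  fixes n :: nat and w :: "nat list"
  assumes "w \<in> perms n"
  shows "newton (key w) = bruhat_polytope n w (w0 n)"
proof -
  let ?f = "key w"
  have Pr: "Prp n ?f w" unfolding key_def using main_ind[OF assms] by simp
  have nw: "newton ?f = conv (vecb ` Poly_Mapping.keys ?f)"
    unfolding newton_def by (rule arg_cong[where f=conv]) (auto simp: vecb_def in_keys_iff)
  have bp: "bruhat_polytope n w (w0 n) = conv (perm_vec ` {\<sigma>. bruhat_le w \<sigma>})"
    unfolding bruhat_polytope_def
    by (rule arg_cong[where f=conv]) (auto intro: perm_le[OF assms] le_w0)
  have 1: "conv (vecb ` Poly_Mapping.keys ?f) \<subseteq> conv (perm_vec ` {\<sigma>. bruhat_le w \<sigma>})"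
    by (rule conv_conv) (use Pr in \<open>auto simp: Prp_def\<close>)
  have "perm_vec ` {\<sigma>. bruhat_le w \<sigma>} \<subseteq> vecb ` Poly_Mapping.keys ?f"
  proof
    fix x assume "x \<in> perm_vec ` {\<sigma>. bruhat_le w \<sigma>}"
    then obtain \<sigma> where \<sigma>: "bruhat_le w \<sigma>" "x = perm_vec \<sigma>" by blast
    then have "Poly_Mapping.lookup ?f (exps \<sigma>) = 1" using Pr by (simp add: Prp_def)
    then have "exps \<sigma> \<in> Poly_Mapping.keys ?f" by (simp add: in_keys_iff)
    then show "x \<in> vecb ` Poly_Mapping.keys ?f" using \<sigma>(2) vecb_exps by (metis image_eqI)
  qed
  then have 2: "conv (perm_vec ` {\<sigma>. bruhat_le w \<sigma>}) \<subseteq> conv (vecb ` Poly_Mapping.keys ?f)"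
    by (rule conv_mono)
  show ?thesis using 1 2 nw bp by simp
qed


end
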